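(* Every graph $G\in\mathcal{V}_1$ can be properly vertex colored with at most $3$ colors. Moreover, a graph $G\in\mathcal{V}_1$ can be properly vertex colored with at most $2$ colors if and only if $G$ contains no cycle of odd length.
   Context: All graphs are finite simple graphs. For a vertex $x$, $S(x)$ is the subgraph induced by the neighbors of $x$. $\mathcal{V}_1$ is the class of one-dimensional varieties, defined as follows: $G\in\mathcal{V}_1$ if every unit sphere $S(x)$ is a nonempty graph without edges (equivalently, $G$ is triangle-free and has no isolated vertices), and, writing $\sigma(G)$ for the subgraph induced by the vertices of degree at least $3$ (the singularities) and $\delta(G)$ for the subgraph induced by the vertices of degree $1$ (the boundary), both $\sigma(G)$ and $\delta(G)$ have no edges. *)

theory Defs
  imports Main
begin

definition simple_graph :: "'a set \<Rightarrow> ('a \<Rightarrow> 'a \<Rightarrow> bool) \<Rightarrow> bool" where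
  "simple_graph V E \<longleftrightarrow> finite V \<and> (\<forall>x y. E x y \<longrightarrow> x \<in> V \<and> y \<in> V)
     \<and> (\<forall>x y. E x y \<longrightarrow> E y x) \<and> (\<forall>x. \<not> E x x)"

text \<open>Vertex set of the unit sphere S(x) (the subgraph induced by the neighbours of x).\<close>
definition nbrs :: "'a set \<Rightarrow> ('a \<Rightarrow> 'a \<Rightarrow> bool) \<Rightarrow> 'a \<Rightarrow> 'a set" where
  "nbrs V E x = {y \<in> V. E x y}"

definition deg :: "'a set \<Rightarrow> ('a \<Rightarrow> 'a \<Rightarrow> bool) \<Rightarrow> 'a \<Rightarrow> nat" where
  "deg V E x = card (nbrs V E x)"

definition in_V1 :: "'a set \<Rightarrow> ('a \<Rightarrow> 'a \<Rightarrow> bool) \<Rightarrow> bool" where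
  "in_V1 V E \<longleftrightarrow> simple_graph V E
     \<and> (\<forall>x\<in>V. nbrs V E x \<noteq> {} \<and> (\<forall>y\<in>nbrs V E x. \<forall>z\<in>nbrs V E x. \<not> E y z))
     \<and> (\<forall>x y. E x y \<and> 3 \<le> deg V E x \<and> 3 \<le> deg V E y \<longrightarrow> False)
     \<and> (\<forall>x y. E x y \<and> deg V E x = 1 \<and> deg V E y = 1 \<longrightarrow> False)"

definition colorable :: "'a set \<Rightarrow> ('a \<Rightarrow> 'a \<Rightarrow> bool) \<Rightarrow> nat \<Rightarrow> bool" where
  "colorable V E k \<longleftrightarrow> (\<exists>c :: 'a \<Rightarrow> nat. (\<forall>x\<in>V. c x < k) \<and> (\<forall>x y. E x y \<longrightarrow> c x \<noteq> c y))"

definition is_cycle :: "'a set \<Rightarrow> ('a \<Rightarrow> 'a \<Rightarrow> bool) \<Rightarrow> 'a list \<Rightarrow> bool" where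
  "is_cycle V E xs \<longleftrightarrow> 3 \<le> length xs \<and> distinct xs \<and> set xs \<subseteq> V
     \<and> (\<forall>i. Suc i < length xs \<longrightarrow> E (xs ! i) (xs ! Suc i))
     \<and> E (last xs) (hd xs)"

definition has_odd_cycle :: "'a set \<Rightarrow> ('a \<Rightarrow> 'a \<Rightarrow> bool) \<Rightarrow> bool" where
  "has_odd_cycle V E \<longleftrightarrow> (\<exists>xs. is_cycle V E xs \<and> odd (length xs))"

end

theory Submission
  imports Defs
begin

lemma L1: "successively E (xs @ ys) \<Longrightarrow> successively E xs \<and> successively E ys"
  by (simp add: successively_append_iff)
lemma L2: "successively E (xs @ [y]) \<Longrightarrow> successively E (y # zs) \<Longrightarrow> successively E (xs @ [y] @ zs)"
  by (induction xs rule: induct_list012) auto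

lemma odd_closed_walk_cycle:
  assumes sg: "simple_graph V E"
  shows "xs \<noteq> [] \<Longrightarrow> successively E xs \<Longrightarrow> E (last xs) (hd xs) \<Longrightarrow> odd (length xs)
         \<Longrightarrow> has_odd_cycle V E"
proof (induction xs rule: length_induct)
  case (1 ws)
  have irr: "\<And>x. \<not> E x x" and inV: "\<And>x y. E x y \<Longrightarrow> x \<in> V \<and> y \<in> V"
    using sg unfolding simple_graph_def by auto
  show ?case
  proof (cases "distinct ws")
    case True
    have "length ws \<noteq> 1"
    proof
      assume "length ws = 1"
      then obtain a where "ws = [a]" by (cases ws) auto
      with 1 irr show False by auto
    qed
    with 1 have l3: "3 \<le> length ws" by presburger
    have "set ws \<subseteq> V"
    proof
      fix x assume "x \<in> set ws"
      then obtain i where i: "i < length ws" "x = ws ! i" by (auto simp: in_set_conv_nth)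
      show "x \<in> V"
      proof (cases "Suc i < length ws")
        case True
        then show ?thesis using successively_nth[OF 1(3) True] inV i by auto
      next
        case False
        then have "i = length ws - 1" using i by simp
        then have "x = last ws" using i 1(2) by (simp add: last_conv_nth)
        then show ?thesis using 1(4) inV by auto
      qed
    qed
    then have "is_cycle V E ws" unfolding is_cycle_def
      using True l3 1 by (simp add: successively_conv_nth)
    then show ?thesis unfolding has_odd_cycle_def using 1 by auto
  next
    case False
    then obtain as bs cs y where ws: "ws = as @ [y] @ bs @ [y] @ cs"
      using not_distinct_decomp by blast
    define W1 where "W1 = y # bs"
    define W2 where "W2 = as @ [y] @ cs"
    have s: "successively E ws" by fact
    have sb: "successively E ((y # bs) @ [y])"
      using s L1[of E "as" "(y # bs) @ [y] @ cs"] L1[of E "(y # bs) @ [y]" cs] unfolding ws by simp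
    have c1: "successively E W1"
      using L1[OF sb] unfolding W1_def by simp
    have e1: "E (last W1) (hd W1)"
      using sb unfolding W1_def by (simp only: successively_append_iff) simp
    have sa: "successively E (as @ [y])"
      using s L1[of E "as @ [y]" "bs @ [y] @ cs"] unfolding ws by simp
    have sc: "successively E (y # cs)"
      using s L1[of E "as @ [y] @ bs" "y # cs"] unfolding ws by simp
    have c2: "successively E W2" unfolding W2_def using L2[OF sa sc] .
    have "last W2 = last ws" unfolding W2_def ws by (cases cs) simp_all
    moreover have "hd W2 = hd ws" unfolding W2_def ws by (cases as) simp_all
    ultimately have e2: "E (last W2) (hd W2)" using 1(4) by simp
    have len: "length W1 + length W2 = length ws" "length W1 < length ws" "length W2 < length ws"
      by (simp_all add: ws W1_def W2_def)
    show ?thesis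
    proof (cases "odd (length W1)")
      case True
      have "W1 \<noteq> []" by (simp add: W1_def)
      then show ?thesis using 1(1) len(2) c1 e1 True by blast
    next
      case False
      then have "odd (length W2)" using len(1) 1(5) by presburger
      have "W2 \<noteq> []" by (simp add: W2_def)
      then show ?thesis using 1(1) len(3) c2 e2 \<open>odd (length W2)\<close> by blast
    qed
  qed
qed

inductive walk :: "('a \<Rightarrow> 'a \<Rightarrow> bool) \<Rightarrow> 'a \<Rightarrow> 'a \<Rightarrow> nat \<Rightarrow> bool" for E where
  w0: "walk E x x 0"
| wS: "E x y \<Longrightarrow> walk E y z n \<Longrightarrow> walk E x z (Suc n)"

lemma walk_trans: "walk E x y n \<Longrightarrow> walk E y z m \<Longrightarrow> walk E x z (n + m)"
proof (induction rule: walk.induct)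
  case (w0 x) then show ?case by simp
next
  case (wS x y z' n)
  then show ?case using walk.wS[OF wS.hyps(1) wS.IH[OF wS.prems]] by simp
qed

lemma walk_snoc: "walk E x y n \<Longrightarrow> E y z \<Longrightarrow> walk E x z (Suc n)"
proof -
  assume a: "walk E x y n" "E y z"
  have "walk E y z (Suc 0)" by (rule walk.wS[of E y z z 0, OF a(2) walk.w0[of E z]])
  from walk_trans[OF a(1) this] show ?thesis by simp
qed

lemma walk_sym: assumes sy: "\<forall>x y. E x y \<longrightarrow> E y x"
  shows "walk E x y n \<Longrightarrow> walk E y x n"
proof (induction rule: walk.induct)
  case (w0 x) then show ?case by (rule walk.w0)
next
  case (wS x y z n)
  then show ?case using walk_snoc[OF wS.IH sy[rule_format, OF wS.hyps(1)]] by simp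
qed

lemma walk_list: "walk E x y n \<Longrightarrow> \<exists>xs. xs \<noteq> [] \<and> hd xs = x \<and> last xs = y \<and> successively E xs \<and> length xs = Suc n"
proof (induction rule: walk.induct)
  case (w0 x) then show ?case by (intro exI[of _ "[x]"]) auto
next
  case (wS x y z n)
  then obtain xs where "xs \<noteq> [] \<and> hd xs = y \<and> last xs = z \<and> successively E xs \<and> length xs = Suc n" by blast
  then show ?case using wS by (intro exI[of _ "x # xs"]) (auto simp: successively_Cons)
qed

lemma odd_closed_walk:
  assumes sg: "simple_graph V E" and w: "walk E x x n" and o: "odd n"
  shows "has_odd_cycle V E"
proof -
  obtain xs where xs: "xs \<noteq> []" "hd xs = x" "last xs = x" "successively E xs" "length xs = Suc n"
    using walk_list[OF w] by blast
  define ys where "ys = butlast xs"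
  have ne: "ys \<noteq> []" using xs o unfolding ys_def by (cases xs) auto
  have xe: "xs = ys @ [x]" using xs unfolding ys_def by (metis append_butlast_last_id)
  have "successively E ys" "E (last ys) x" using xs(4) ne unfolding xe
    by (auto simp: successively_append_iff)
  moreover have "hd ys = x" using xs(2) ne unfolding xe by simp
  moreover have "odd (length ys)" using xs(5) o unfolding xe by simp
  ultimately show ?thesis using odd_closed_walk_cycle[OF sg ne] by auto
qed

lemma bip:
  assumes sg: "simple_graph V E" and no: "\<not> has_odd_cycle V E"
  shows "colorable V E 2"
proof -
  have symA: "\<forall>x y. E x y \<longrightarrow> E y x" using sg unfolding simple_graph_def by auto
  have sym: "\<And>x y. E x y \<Longrightarrow> E y x" using symA by auto
  define reach where "reach x y = (\<exists>n. walk E x y n)" for x y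
  define r where "r x = (SOME z. reach x z)" for x
  have rr: "reach x (r x)" for x unfolding r_def
    by (rule someI[of _ x]) (auto simp: reach_def intro: walk.intros)
  have req: "r x = r y" if "E x y" for x y
  proof -
    have "reach x = reach y"
    proof (intro ext iffI)
      fix z assume "reach x z"
      then obtain n where "walk E x z n" by (auto simp: reach_def)
      then have "walk E y z (Suc n)" using sym[OF that] by (auto intro: walk.intros)
      then show "reach y z" by (auto simp: reach_def)
    next
      fix z assume "reach y z"
      then obtain n where "walk E y z n" by (auto simp: reach_def)
      then have "walk E x z (Suc n)" using that by (auto intro: walk.intros)
      then show "reach x z" by (auto simp: reach_def)
    qed
    then show ?thesis unfolding r_def by simp
  qed
  have rw: "\<exists>n. walk E (r x) x n" for x
    using rr[of x] walk_sym[OF symA] unfolding reach_def by blast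
  define c where "c x = (if \<exists>n. even n \<and> walk E (r x) x n then 0 else 1::nat)" for x
  show ?thesis unfolding colorable_def
  proof (intro exI[of _ c] conjI allI impI ballI)
    fix x assume "x \<in> V" show "c x < 2" by (simp add: c_def)
  next
    fix x y assume e: "E x y"
    have ry: "r y = r x" using req[OF e] by simp
    show "c x \<noteq> c y"
    proof (cases "\<exists>n. even n \<and> walk E (r x) x n")
      case True
      then obtain n where n: "even n" "walk E (r x) x n" by blast
      have "\<not> (\<exists>m. even m \<and> walk E (r x) y m)"
      proof
        assume "\<exists>m. even m \<and> walk E (r x) y m"
        then obtain m where m: "even m" "walk E (r x) y m" by blast
        have "walk E (r x) y (Suc n)" using walk_snoc[OF n(2) e] .
        moreover have "walk E y (r x) m" using walk_sym[OF symA m(2)] .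
        ultimately have "walk E (r x) (r x) (Suc n + m)" by (rule walk_trans)
        moreover have "odd (Suc n + m)" using n(1) m(1) by simp
        ultimately show False using odd_closed_walk[OF sg] no by blast
      qed
      then show ?thesis using True ry by (simp add: c_def)
    next
      case False
      obtain n where n: "walk E (r x) x n" using rw by blast
      with False have "odd n" by auto
      have "walk E (r x) y (Suc n)" using walk_snoc[OF n e] .
      moreover have "even (Suc n)" using \<open>odd n\<close> by simp
      ultimately have "\<exists>m. even m \<and> walk E (r y) y m" using ry by metis
      then show ?thesis using False by (simp add: c_def)
    qed
  qed
qed

lemma col2_no_odd:
  assumes sg: "simple_graph V E" and col: "colorable V E 2"
  shows "\<not> has_odd_cycle V E"
proof
  assume "has_odd_cycle V E"
  then obtain xs where cy: "is_cycle V E xs" and o: "odd (length xs)"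
    unfolding has_odd_cycle_def by blast
  obtain c :: "'a \<Rightarrow> nat" where c: "\<forall>x\<in>V. c x < 2" "\<forall>x y. E x y \<longrightarrow> c x \<noteq> c y"
    using col unfolding colorable_def by blast
  have sub: "set xs \<subseteq> V" and ch: "\<forall>i. Suc i < length xs \<longrightarrow> E (xs ! i) (xs ! Suc i)"
    and l: "3 \<le> length xs" and cl: "E (last xs) (hd xs)"
    using cy unfolding is_cycle_def by auto
  have cv: "c (xs ! i) < 2" if "i < length xs" for i using c(1) sub nth_mem[OF that] by blast
  have par: "i < length xs \<Longrightarrow> c (xs ! i) = (if even i then c (xs ! 0) else 1 - c (xs ! 0))" for i
  proof (induction i)
    case 0 then show ?case by simp
  next
    case (Suc i)
    then have "c (xs ! i) \<noteq> c (xs ! Suc i)" using ch c(2) by auto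
    moreover have "c (xs ! Suc i) < 2" "c (xs ! i) < 2" using cv[of "Suc i"] cv[of i] Suc.prems by auto
    moreover have "0 < length xs" using Suc.prems by linarith
    then have "c (xs ! 0) < 2" by (rule cv)
    ultimately show ?case using Suc by auto
  qed
  have ne: "xs \<noteq> []" using l by auto
  have "c (last xs) = c (hd xs)"
    using par[of "length xs - 1"] l o ne by (simp add: last_conv_nth hd_conv_nth)
  then show False using c(2) cl by auto
qed

lemma col3:
  assumes v: "in_V1 V E"
  shows "colorable V E 3"
proof -
  have sg: "simple_graph V E" using v unfolding in_V1_def by auto
  have fin: "finite V" and inV: "\<And>x y. E x y \<Longrightarrow> x \<in> V \<and> y \<in> V"
    and irr: "\<And>x. \<not> E x x" and sym: "\<And>x y. E x y \<Longrightarrow> E y x"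
    using sg unfolding simple_graph_def by auto
  have hh: "\<And>x y. E x y \<Longrightarrow> 3 \<le> deg V E x \<Longrightarrow> 3 \<le> deg V E y \<Longrightarrow> False"
    using v unfolding in_V1_def by blast
  define L where "L = {x\<in>V. deg V E x \<le> 2}"
  define H where "H = {x\<in>V. \<not> deg V E x \<le> 2}"
  have gen: "U \<subseteq> L \<Longrightarrow> \<exists>c. (\<forall>x\<in>V. c x < (3::nat)) \<and> (\<forall>x y. E x y \<and> x \<in> H \<union> U \<and> y \<in> H \<union> U \<longrightarrow> c x \<noteq> c y)"
    if "finite U" for U
    using that
  proof (induction U rule: finite_induct)
    case empty
    show ?case by (intro exI[of _ "\<lambda>_. 0"]) (auto simp: H_def dest: hh)
  next
    case (insert u U)
    then obtain c where c: "\<forall>x\<in>V. c x < (3::nat)" "\<forall>x y. E x y \<and> x \<in> H \<union> U \<and> y \<in> H \<union> U \<longrightarrow> c x \<noteq> c y"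
      by auto
    have uL: "u \<in> L" using insert by auto
    have fn: "finite (nbrs V E u)" using fin unfolding nbrs_def by auto
    have cd: "card (c ` nbrs V E u) \<le> 2"
      using card_image_le[OF fn, of c] uL unfolding L_def deg_def by auto
    have "\<exists>k<(3::nat). k \<notin> c ` nbrs V E u"
    proof (rule ccontr)
      assume "\<not> ?thesis"
      then have "{0,1,2} \<subseteq> c ` nbrs V E u" by auto
      from card_mono[OF finite_imageI[OF fn] this] cd show False by simp
    qed
    then obtain k where k: "k < 3" "k \<notin> c ` nbrs V E u" by blast
    show ?case
    proof (intro exI[of _ "c(u := k)"] conjI allI impI ballI)
      fix x assume "x \<in> V" then show "(c(u := k)) x < 3" using c k by auto
    next
      fix x y assume a: "E x y \<and> x \<in> H \<union> insert u U \<and> y \<in> H \<union> insert u U"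
      show "(c(u := k)) x \<noteq> (c(u := k)) y"
      proof (cases "x = u")
        case True
        then have "y \<noteq> u" using a irr by auto
        moreover have "y \<in> nbrs V E u" using a True inV unfolding nbrs_def by auto
        ultimately show ?thesis using True k by auto
      next
        case False
        show ?thesis
        proof (cases "y = u")
          case True
          have "x \<in> nbrs V E u" using a True inV sym unfolding nbrs_def by auto
          then show ?thesis using True False k by auto
        next
          case False2: False
          then show ?thesis using False a c(2) by auto
        qed
      qed
    qed
  qed
  have fL: "finite L" using fin unfolding L_def by auto
  obtain c where c: "\<forall>x\<in>V. c x < (3::nat)" "\<forall>x y. E x y \<and> x \<in> H \<union> L \<and> y \<in> H \<union> L \<longrightarrow> c x \<noteq> c y"
    using gen[OF fL subset_refl] by blast
  have HL: "H \<union> L = V" unfolding H_def L_def by auto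
  have "\<forall>x y. E x y \<longrightarrow> c x \<noteq> c y"
  proof (intro allI impI)
    fix x y assume "E x y"
    then have "x \<in> H \<union> L" "y \<in> H \<union> L" using inV HL by auto
    then show "c x \<noteq> c y" using c(2) \<open>E x y\<close> by blast
  qed
  then show ?thesis unfolding colorable_def using c(1) by blast
qed

theorem mainTheorem15:
  fixes V :: "'a set" and E :: "'a \<Rightarrow> 'a \<Rightarrow> bool"
  assumes "in_V1 V E"
  shows "colorable V E 3 \<and> (colorable V E 2 \<longleftrightarrow> \<not> has_odd_cycle V E)"
proof -
  have sg: "simple_graph V E" using assms unfolding in_V1_def by auto
  show ?thesis using col3[OF assms] bip[OF sg] col2_no_odd[OF sg] by blast
qed

end
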